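(* A well-founded reduced order $(S,<_S)$ is tame if and only if it embeds into $(R_\lambda,<_{R_\lambda})$ for some ordinal $\lambda$. Moreover, in that case the minimal ordinal $\lambda$ such that $(S,<_S)$ embeds into $R_\lambda$ is $\lambda=\mathrm{tamerank}(S,<_S)$, and $\mathrm{tamerank}(S,<_S)<|S|^+$.
   Context: An order $(S,<_S)$ is a set with a strict partial order (antisymmetric, transitive). An embedding of $(S,<_S)$ into $(R,<_R)$ is an injection $\pi$ with $x<_S y\iff \pi(x)<_R\pi(y)$. For an ordinal $\lambda$, $R_\lambda=\{(\alpha,\beta)\in\lambda^2\mid \alpha\leq\beta\}$ with $(\alpha,\beta)<_{R_\lambda}(\alpha',\beta')\iff \beta<\alpha'$. $R_{2,2}$ is the order on $\{x_0,x_1,y_0,y_1\}$ whose only relations are $x_0<y_0$, $x_1<y_1$. $S_{\omega,2}$ is the order on $\{x_n\}_{n<\omega}\uplus\{y_n\}_{n<\omega}$ whose relations are exactly $x_m<y_n$ for $m\geq n$. An order is tame if it embeds neither $R_{2,2}$ nor $S_{\omega,2}$. For $x\in S$: $d(x)=\{z\mid z<_S x\}$, $u(x)=\{z\mid x<_S z\}$, $\mathrm{cu}(x)=S\setminus u(x)$, $\mathrm{CU}(S)=\{\mathrm{cu}(x)\mid x\in S\}$. $S$ is reduced if there are no distinct $x,y\in S$ with $(d(x),u(x))=(d(y),u(y))$. For a tame well-founded order, $(\mathrm{CU}(S),\subsetneq)$ is a well-order and $\mathrm{tamerank}(S,<_S)$ is its order type. *)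

theory Defs
  imports Main
begin

text \<open>An order is a carrier set S together with a relation lt (only its restriction
to S matters).  Strict partial order: irreflexive and transitive on S.\<close>

definition strict_po :: "'a set \<Rightarrow> ('a \<Rightarrow> 'a \<Rightarrow> bool) \<Rightarrow> bool" where
  "strict_po S lt \<longleftrightarrow>
     (\<forall>x\<in>S. \<not> lt x x) \<and>
     (\<forall>x\<in>S. \<forall>y\<in>S. \<forall>z\<in>S. lt x y \<longrightarrow> lt y z \<longrightarrow> lt x z)"

definition order_embedding ::
  "'a set \<Rightarrow> ('a \<Rightarrow> 'a \<Rightarrow> bool) \<Rightarrow> 'b set \<Rightarrow> ('b \<Rightarrow> 'b \<Rightarrow> bool) \<Rightarrow> ('a \<Rightarrow> 'b) \<Rightarrow> bool" where
  "order_embedding S lessS T lessT \<pi> \<longleftrightarrow>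
     \<pi> ` S \<subseteq> T \<and> inj_on \<pi> S \<and>
     (\<forall>x\<in>S. \<forall>y\<in>S. lessS x y \<longleftrightarrow> lessT (\<pi> x) (\<pi> y))"

definition embeds ::
  "'a set \<Rightarrow> ('a \<Rightarrow> 'a \<Rightarrow> bool) \<Rightarrow> 'b set \<Rightarrow> ('b \<Rightarrow> 'b \<Rightarrow> bool) \<Rightarrow> bool" where
  "embeds S lessS T lessT \<longleftrightarrow> (\<exists>\<pi>. order_embedding S lessS T lessT \<pi>)"

text \<open>Ordinals are represented as well-order relations (HOL's Well_order, which is
reflexive: (a,b) in r means a \<le> b).  R_lambda for the ordinal given by r:\<close>

definition R_carrier :: "'b rel \<Rightarrow> ('b \<times> 'b) set" where
  "R_carrier r = {(\<alpha>, \<beta>). (\<alpha>, \<beta>) \<in> r}"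

definition R_less :: "'b rel \<Rightarrow> ('b \<times> 'b) \<Rightarrow> ('b \<times> 'b) \<Rightarrow> bool" where
  "R_less r p q \<longleftrightarrow> (snd p, fst q) \<in> r \<and> snd p \<noteq> fst q"

datatype R22_elem = X0 | X1 | Y0 | Y1

definition R22_less :: "R22_elem \<Rightarrow> R22_elem \<Rightarrow> bool" where
  "R22_less a b \<longleftrightarrow> (a = X0 \<and> b = Y0) \<or> (a = X1 \<and> b = Y1)"

text \<open>The order S_{omega,2}: Inl n is x_n, Inr n is y_n.\<close>

definition S\<omega>2_less :: "(nat + nat) \<Rightarrow> (nat + nat) \<Rightarrow> bool" where
  "S\<omega>2_less a b \<longleftrightarrow> (\<exists>m n. a = Inl m \<and> b = Inr n \<and> m \<ge> n)"

definition tame :: "'a set \<Rightarrow> ('a \<Rightarrow> 'a \<Rightarrow> bool) \<Rightarrow> bool" where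
  "tame S lt \<longleftrightarrow>
     \<not> embeds (UNIV :: R22_elem set) R22_less S lt \<and>
     \<not> embeds (UNIV :: (nat + nat) set) S\<omega>2_less S lt"

definition down :: "'a set \<Rightarrow> ('a \<Rightarrow> 'a \<Rightarrow> bool) \<Rightarrow> 'a \<Rightarrow> 'a set" where
  "down S lt x = {z \<in> S. lt z x}"

definition up :: "'a set \<Rightarrow> ('a \<Rightarrow> 'a \<Rightarrow> bool) \<Rightarrow> 'a \<Rightarrow> 'a set" where
  "up S lt x = {z \<in> S. lt x z}"

definition cu :: "'a set \<Rightarrow> ('a \<Rightarrow> 'a \<Rightarrow> bool) \<Rightarrow> 'a \<Rightarrow> 'a set" where
  "cu S lt x = S - up S lt x"

definition CU :: "'a set \<Rightarrow> ('a \<Rightarrow> 'a \<Rightarrow> bool) \<Rightarrow> 'a set set" where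
  "CU S lt = cu S lt ` S"

definition reduced :: "'a set \<Rightarrow> ('a \<Rightarrow> 'a \<Rightarrow> bool) \<Rightarrow> bool" where
  "reduced S lt \<longleftrightarrow>
     \<not> (\<exists>x\<in>S. \<exists>y\<in>S. x \<noteq> y \<and> down S lt x = down S lt y \<and> up S lt x = up S lt y)"

text \<open>tamerank: the order type of (CU(S), proper inclusion), represented by the
(reflexive) well-order relation of inclusion on CU(S).\<close>

definition tamerank :: "'a set \<Rightarrow> ('a \<Rightarrow> 'a \<Rightarrow> bool) \<Rightarrow> 'a set rel" where
  "tamerank S lt = {(A, B). A \<in> CU S lt \<and> B \<in> CU S lt \<and> A \<subseteq> B}"

end

theory Submission
  imports Defs "HOL-Library.Ramsey"
begin


lemma wo_facts:
  assumes "Well_order r"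
  shows "trans r" "antisym r" "total_on (Field r) r" "refl_on (Field r) r" "wf (r - Id)"
  using assms unfolding order_on_defs by auto

lemma wo_le_total:
  assumes "Well_order r" "a \<in> Field r" "b \<in> Field r" "\<not> ((a,b) \<in> r \<and> a \<noteq> b)"
  shows "(b,a) \<in> r"
proof (cases "a = b")
  case True then show ?thesis using wo_facts(4)[OF assms(1)] assms(2) unfolding refl_on_def by auto
next
  case False then show ?thesis using wo_facts(3)[OF assms(1)] assms(2-4) unfolding total_on_def by blast
qed

lemma strict_mono_ordLeq:
  assumes r: "Well_order r" and r': "Well_order r'"
    and fF: "\<And>a. a \<in> Field r \<Longrightarrow> f a \<in> Field r'"
    and fm: "\<And>a b. (a,b) \<in> r \<Longrightarrow> a \<noteq> b \<Longrightarrow> (f a, f b) \<in> r' \<and> f a \<noteq> f b"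
  shows "(r, r') \<in> ordLeq"
proof (rule ccontr)
  assume "(r, r') \<notin> ordLeq"
  then have "(r', r) \<in> ordLess" using not_ordLeq_iff_ordLess[OF r' r] by simp
  then obtain g where g: "embedS r' r g" unfolding ordLess_def by auto
  then have emb: "embed r' r g" and nb: "\<not> bij_betw g (Field r') (Field r)" unfolding embedS_def by auto
  have of: "wo_rel.ofilter r (g ` Field r')" using embed_Field_ofilter[OF r' r emb] .
  have inj: "inj_on g (Field r')" using embed_inj_on[OF r' emb] .
  have cmp: "compat r' r g" using embed_compat[OF emb] .
  have "g ` Field r' \<noteq> Field r" using nb inj unfolding bij_betw_def by blast
  moreover have "wo_rel r" using r unfolding wo_rel_def .
  ultimately obtain a where a: "a \<in> Field r" "g ` Field r' = underS r a"
    using of wo_rel.ofilter_underS_Field[of r "g ` Field r'"] by blast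
  define h where "h = g \<circ> f"
  have hF: "h x \<in> underS r a" if "x \<in> Field r" for x
    using a fF[OF that] unfolding h_def by auto
  have hm: "(h x, h y) \<in> r \<and> h x \<noteq> h y" if "(x,y) \<in> r" "x \<noteq> y" for x y
  proof -
    have "x \<in> Field r" "y \<in> Field r" using that unfolding Field_def by auto
    then have "f x \<in> Field r'" "f y \<in> Field r'" using fF by auto
    moreover have "(f x, f y) \<in> r'" "f x \<noteq> f y" using fm that by auto
    ultimately show ?thesis using cmp inj unfolding compat_def inj_on_def h_def by auto
  qed
  define B where "B = {x \<in> Field r. (h x, x) \<in> r \<and> h x \<noteq> x}"
  have "a \<in> B" using hF[OF a(1)] a(1) unfolding B_def underS_def by auto
  then obtain m where m: "m \<in> B" "\<And>y. (y, m) \<in> r - Id \<Longrightarrow> y \<notin> B"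
    by (rule wfE_min[OF wo_facts(5)[OF r]]) blast
  have mr: "(h m, m) \<in> r" "h m \<noteq> m" "m \<in> Field r" using m(1) unfolding B_def by auto
  have "h m \<in> Field r" using hF[OF mr(3)] unfolding underS_def Field_def by auto
  moreover have "(h (h m), h m) \<in> r \<and> h (h m) \<noteq> h m" using hm[OF mr(1,2)] .
  ultimately have "h m \<in> B" unfolding B_def by auto
  moreover have "(h m, m) \<in> r - Id" using mr by auto
  ultimately show False using m(2) by blast
qed




lemma spo_irr: "strict_po S lt \<Longrightarrow> x \<in> S \<Longrightarrow> \<not> lt x x"
  unfolding strict_po_def by blast
lemma spo_trans: "strict_po S lt \<Longrightarrow> x \<in> S \<Longrightarrow> y \<in> S \<Longrightarrow> z \<in> S \<Longrightarrow> lt x y \<Longrightarrow> lt y z \<Longrightarrow> lt x z"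
  unfolding strict_po_def by blast

lemma up_sub: "up S lt x \<subseteq> S" unfolding up_def by auto
lemma cu_mem: "z \<in> cu S lt x \<longleftrightarrow> z \<in> S \<and> \<not> lt x z" unfolding cu_def up_def by auto

lemma embeds_trans:
  assumes "embeds A la B lb" "embeds B lb C lc" shows "embeds A la C lc"
proof -
  obtain f g where f: "order_embedding A la B lb f" and g: "order_embedding B lb C lc g"
    using assms unfolding embeds_def by blast
  have "order_embedding A la C lc (g \<circ> f)"
    using f g unfolding order_embedding_def inj_on_def by (auto simp: image_subset_iff)
  then show ?thesis unfolding embeds_def by blast
qed

lemma cu_chain:
  assumes po: "strict_po S lt" and t: "tame S lt" and x: "x \<in> S" and y: "y \<in> S"
  shows "cu S lt x \<subseteq> cu S lt y \<or> cu S lt y \<subseteq> cu S lt x"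
proof (rule ccontr)
  assume "\<not> ?thesis"
  then obtain a b where a: "a \<in> cu S lt x" "a \<notin> cu S lt y" and b: "b \<in> cu S lt y" "b \<notin> cu S lt x"
    by blast
  have aS: "a \<in> S" and bS: "b \<in> S" using a b unfolding cu_def by auto
  have ya: "lt y a" and nxa: "\<not> lt x a" using a aS cu_mem by metis+
  have xb: "lt x b" and nyb: "\<not> lt y b" using b bS cu_mem by metis+
  note irr = spo_irr[OF po] and tr = spo_trans[OF po]
  have nxy: "\<not> lt x y" using tr[OF x y aS] ya nxa by blast
  have nyx: "\<not> lt y x" using tr[OF y x bS] xb nyb by blast
  have nab: "\<not> lt a b" using tr[OF y aS bS] ya nyb by blast
  have nba: "\<not> lt b a" using tr[OF x bS aS] xb nxa by blast
  have nax: "\<not> lt a x" using tr[OF y aS x] ya nyx by blast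
  have nby: "\<not> lt b y" using tr[OF x bS y] xb nxy by blast
  have nay: "\<not> lt a y" using tr[OF aS y aS] ya irr[OF aS] by blast
  have nbx: "\<not> lt b x" using tr[OF bS x bS] xb irr[OF bS] by blast
  have d: "x \<noteq> y" "x \<noteq> a" "x \<noteq> b" "y \<noteq> a" "y \<noteq> b" "a \<noteq> b"
    using a irr[OF x] irr[OF y] ya nyx xb nxy nyb by auto
  define \<pi> where "\<pi> e = (case e of X0 \<Rightarrow> x | Y0 \<Rightarrow> b | X1 \<Rightarrow> y | Y1 \<Rightarrow> a)" for e
  have "order_embedding (UNIV :: R22_elem set) R22_less S lt \<pi>"
    unfolding order_embedding_def
  proof (intro conjI ballI)
    show "\<pi> ` UNIV \<subseteq> S" using x y aS bS by (auto simp: \<pi>_def split: R22_elem.splits)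
    show "inj_on \<pi> UNIV" unfolding inj_on_def
      apply (intro ballI impI) subgoal for e f using d by (cases e; cases f) (auto simp: \<pi>_def) done
    fix e f :: R22_elem
    show "R22_less e f = lt (\<pi> e) (\<pi> f)"
      using irr[OF x] irr[OF y] irr[OF aS] irr[OF bS] ya nxa xb nyb nxy nyx nab nba nax nby nay nbx
      by (cases e; cases f) (auto simp: \<pi>_def R22_less_def)
  qed
  then show False using t unfolding tame_def embeds_def by blast
qed

lemma R_not_R22:
  assumes r: "Well_order r"
  shows "\<not> embeds (UNIV :: R22_elem set) R22_less (R_carrier r) (R_less r)"
proof
  assume "embeds (UNIV :: R22_elem set) R22_less (R_carrier r) (R_less r)"
  then obtain \<pi> where p: "order_embedding (UNIV :: R22_elem set) R22_less (R_carrier r) (R_less r) \<pi>"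
    unfolding embeds_def by blast
  have inr: "\<pi> e \<in> r" for e using p unfolding order_embedding_def R_carrier_def by auto
  have F: "fst (\<pi> e) \<in> Field r" "snd (\<pi> e) \<in> Field r" for e
    using inr[of e] by (metis FieldI1 FieldI2 prod.collapse)+
  have rel: "R22_less e f \<longleftrightarrow> R_less r (\<pi> e) (\<pi> f)" for e f
    using p unfolding order_embedding_def by auto
  let ?b0 = "snd (\<pi> X0)" and ?c0 = "fst (\<pi> Y0)" and ?b1 = "snd (\<pi> X1)" and ?c1 = "fst (\<pi> Y1)"
  have 1: "(?b0, ?c0) \<in> r" "?b0 \<noteq> ?c0" using rel[of X0 Y0] by (auto simp: R22_less_def R_less_def)
  have 2: "(?b1, ?c1) \<in> r" "?b1 \<noteq> ?c1" using rel[of X1 Y1] by (auto simp: R22_less_def R_less_def)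
  have 3: "(?c1, ?b0) \<in> r" using rel[of X0 Y1] wo_le_total[OF r F(1)[of Y1] F(2)[of X0]]
    by (auto simp: R22_less_def R_less_def)
  have 4: "(?c0, ?b1) \<in> r" using rel[of X1 Y0] wo_le_total[OF r F(1)[of Y0] F(2)[of X1]]
    by (auto simp: R22_less_def R_less_def)
  note tr = wo_facts(1)[OF r] and an = wo_facts(2)[OF r]
  have "(?b0, ?b1) \<in> r" using 1 4 tr unfolding trans_def by blast
  then have "(?b0, ?c1) \<in> r" using 2 tr unfolding trans_def by blast
  then have "?b0 = ?c1" using 3 an unfolding antisym_def by blast
  then have "(?c0, ?b0) \<in> r" using 4 2 tr unfolding trans_def by metis
  then show False using 1 an unfolding antisym_def by blast
qed

lemma R_not_S\<omega>2:
  assumes r: "Well_order r"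
  shows "\<not> embeds (UNIV :: (nat + nat) set) S\<omega>2_less (R_carrier r) (R_less r)"
proof
  assume "embeds (UNIV :: (nat + nat) set) S\<omega>2_less (R_carrier r) (R_less r)"
  then obtain \<pi> where p: "order_embedding (UNIV :: (nat + nat) set) S\<omega>2_less (R_carrier r) (R_less r) \<pi>"
    unfolding embeds_def by blast
  have inr: "\<pi> e \<in> r" for e using p unfolding order_embedding_def R_carrier_def by auto
  have F: "fst (\<pi> e) \<in> Field r" "snd (\<pi> e) \<in> Field r" for e
    using inr[of e] by (metis FieldI1 FieldI2 prod.collapse)+
  have rel: "S\<omega>2_less e f \<longleftrightarrow> R_less r (\<pi> e) (\<pi> f)" for e f
    using p unfolding order_embedding_def by auto
  define c where "c n = fst (\<pi> (Inr n))" for n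
  define b where "b n = snd (\<pi> (Inl n))" for n
  note tr = wo_facts(1)[OF r] and an = wo_facts(2)[OF r]
  have "(c (Suc n), c n) \<in> r - Id" for n
  proof -
    have 1: "(b n, c n) \<in> r" "b n \<noteq> c n" using rel[of "Inl n" "Inr n"]
      by (auto simp: S\<omega>2_less_def R_less_def b_def c_def)
    have 2: "(c (Suc n), b n) \<in> r" using rel[of "Inl n" "Inr (Suc n)"]
        wo_le_total[OF r F(2)[of "Inl n"] F(1)[of "Inr (Suc n)"]]
      by (auto simp: S\<omega>2_less_def R_less_def b_def c_def)
    have "(c (Suc n), c n) \<in> r" using 1 2 tr unfolding trans_def by blast
    moreover have "c (Suc n) \<noteq> c n" using 1 2 an unfolding antisym_def by metis
    ultimately show ?thesis by auto
  qed
  then show False using wo_facts(5)[OF r] unfolding wf_iff_no_infinite_down_chain by blast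
qed

lemma R_tame:
  assumes r: "Well_order r" and e: "embeds S lt (R_carrier r) (R_less r)"
  shows "tame S lt"
  unfolding tame_def
proof
  show "\<not> embeds (UNIV :: R22_elem set) R22_less S lt"
    using R_not_R22[OF r] embeds_trans[OF _ e, of "UNIV :: R22_elem set" R22_less] by blast
  show "\<not> embeds (UNIV :: (nat + nat) set) S\<omega>2_less S lt"
    using R_not_S\<omega>2[OF r] embeds_trans[OF _ e, of "UNIV :: (nat+nat) set" S\<omega>2_less] by blast
qed




lemma wfp_no_chain:
  assumes "wfp_on S lt" "\<And>i. g i \<in> S" "\<And>i. lt (g (Suc i)) (g i)"
  shows False
proof -
  have "range g \<subseteq> S" "range g \<noteq> {}" using assms(2) by auto
  then obtain z where "z \<in> range g" "\<And>y. lt y z \<Longrightarrow> y \<notin> range g"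
    using assms(1) unfolding wfp_on_iff_ex_minimal by meson
  then show False using assms(3) by blast
qed

lemma S\<omega>2_simps[simp]:
  "S\<omega>2_less (Inl m) (Inr n) \<longleftrightarrow> n \<le> m"
  "\<not> S\<omega>2_less (Inl m) (Inl n)"
  "\<not> S\<omega>2_less (Inr m) (Inr n)"
  "\<not> S\<omega>2_less (Inr m) (Inl n)"
  unfolding S\<omega>2_less_def by auto

lemma if3: "(if P then 0 else if Q then 1 else (2::nat)) = t \<Longrightarrow>
   (t = 0 \<longrightarrow> P) \<and> (t = 1 \<longrightarrow> \<not> P \<and> Q) \<and> (t = 2 \<longrightarrow> \<not> P \<and> \<not> Q)"
  by (cases P; cases Q) auto

lemma cu_wf:
  assumes po: "strict_po S lt" and wfS: "wfp_on S lt" and t: "tame S lt"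
    and c: "\<And>i. c i \<in> CU S lt" "\<And>i. c (Suc i) \<subset> c i"
  shows False
proof -
  note irr = spo_irr[OF po] and tr = spo_trans[OF po]
  have ex: "\<forall>i. \<exists>z. z \<in> S \<and> cu S lt z = c i" using c(1) unfolding CU_def by (metis imageE)
  from choice[OF ex] obtain x where x0: "\<forall>i. x i \<in> S \<and> cu S lt (x i) = c i" by (rule exE)
  have x: "\<And>i. x i \<in> S" "\<And>i. cu S lt (x i) = c i" using x0 by auto
  define U where "U i = up S lt (x i)" for i
  have memU: "z \<in> U i \<longleftrightarrow> z \<in> S \<and> lt (x i) z" for z i unfolding U_def up_def by auto
  have Ueq: "U i = S - c i" for i using x(2)[of i] up_sub[of S lt "x i"] unfolding U_def cu_def by auto
  have cS: "c i \<subseteq> S" for i using x(2)[of i] unfolding cu_def by auto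
  have Usuc: "U i \<subset> U (Suc i)" for i using c(2)[of i] cS[of i] cS[of "Suc i"] Ueq by blast
  have Ule: "i \<le> j \<Longrightarrow> U i \<subseteq> U j" for i j by (rule lift_Suc_mono_le[of U]) (use Usuc in auto)
  have Ult: "i < j \<Longrightarrow> U i \<subset> U j" for i j by (rule lift_Suc_mono_less[of U]) (use Usuc in auto)
  have ey: "\<forall>n. \<exists>z. z \<in> U (Suc n) - U n" using Usuc by blast
  from choice[OF ey] obtain y where y0: "\<forall>n. y n \<in> U (Suc n) - U n" by (rule exE)
  have y: "\<And>n. y n \<in> U (Suc n) - U n" using y0 by blast
  have yS: "y n \<in> S" for n using y[of n] memU by blast
  have F1: "lt (x (Suc m)) (y n) \<longleftrightarrow> n \<le> m" for m n
  proof
    assume "lt (x (Suc m)) (y n)"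
    then have "y n \<in> U (Suc m)" using memU yS by blast
    moreover have "y n \<notin> U n" using y by blast
    ultimately show "n \<le> m" using Ule[of "Suc m" n] by (cases "n \<le> m") auto
  next
    assume "n \<le> m" then show "lt (x (Suc m)) (y n)" using y[of n] Ule[of "Suc n" "Suc m"] memU by blast
  qed
  have F3: "i < j \<Longrightarrow> \<not> lt (x i) (x j)" for i j
  proof
    assume ij: "i < j" and l: "lt (x i) (x j)"
    have "U j \<subseteq> U i" using tr[OF x(1) x(1)] l memU by blast
    then show False using Ult[OF ij] by blast
  qed
  have F4: "i < j \<Longrightarrow> \<not> lt (y i) (y j)" for i j
  proof
    assume ij: "i < j" and l: "lt (y i) (y j)"
    have "lt (x (Suc i)) (y i)" using F1 by simp
    then have "lt (x (Suc i)) (y j)" using tr[OF x(1) yS yS] l by blast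
    then show False using F1 ij by simp
  qed
  have xinj: "x i = x j \<Longrightarrow> i = j" for i j
  proof (rule ccontr)
    assume "x i = x j" "i \<noteq> j"
    then have "U i = U j" unfolding U_def by simp
    moreover have "U i \<subset> U j \<or> U j \<subset> U i" using Ult \<open>i \<noteq> j\<close> by (meson linorder_neqE_nat)
    ultimately show False by auto
  qed
  have yinj: "y i = y j \<Longrightarrow> i = j" for i j
  proof (rule ccontr)
    assume e: "y i = y j" "i \<noteq> j"
    have "y a \<noteq> y b" if "a < b" for a b
      using y[of a] y[of b] Ule[of "Suc a" b] that by auto
    then show False using e by (metis linorder_neqE_nat)
  qed
  define f where "f X = (if lt (x (Suc (Max X))) (x (Suc (Min X))) then 0
     else if lt (y (Max X)) (y (Min X)) then 1 else (2::nat))" for X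
  have "\<forall>a\<in>(UNIV::nat set). \<forall>b\<in>UNIV. a \<noteq> b \<longrightarrow> f {a, b} < 3" unfolding f_def by auto
  then obtain H tt where H: "infinite H" "tt < 3" "\<forall>a\<in>H. \<forall>b\<in>H. a \<noteq> b \<longrightarrow> f {a, b} = tt"
    using Ramsey2[of "UNIV :: nat set" f 3] by blast
  define \<phi> where "\<phi> = enumerate H"
  have sm: "strict_mono \<phi>" unfolding \<phi>_def using strict_mono_enumerate[OF H(1)] .
  have phiH: "\<phi> n \<in> H" for n unfolding \<phi>_def using enumerate_in_set[OF H(1)] .
  have hom: "a < b \<Longrightarrow> f {\<phi> a, \<phi> b} = tt" for a b
  proof -
    assume "a < b" then have "\<phi> a < \<phi> b" using sm by (simp add: strict_mono_less)
    then have "\<phi> a \<noteq> \<phi> b" by simp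
    then show ?thesis using H(3) phiH by blast
  qed
  have fval: "a < b \<Longrightarrow> f {\<phi> a, \<phi> b} = (if lt (x (Suc (\<phi> b))) (x (Suc (\<phi> a))) then 0
     else if lt (y (\<phi> b)) (y (\<phi> a)) then 1 else 2)" for a b
  proof -
    assume "a < b" then have "\<phi> a < \<phi> b" using sm strict_mono_less by blast
    then have "Max {\<phi> a, \<phi> b} = \<phi> b" "Min {\<phi> a, \<phi> b} = \<phi> a" by auto
    then show ?thesis unfolding f_def by simp
  qed
  consider "tt = 0" | "tt = 1" | "tt = 2" using H(2) by linarith
  then show False
  proof cases
    case 1
    have "lt (x (Suc (\<phi> (Suc k)))) (x (Suc (\<phi> k)))" for k
    proof -
      have a: "f {\<phi> k, \<phi> (Suc k)} = 0" using hom[of k "Suc k"] 1 by simp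
      have b: "f {\<phi> k, \<phi> (Suc k)} = (if lt (x (Suc (\<phi> (Suc k)))) (x (Suc (\<phi> k))) then 0
     else if lt (y (\<phi> (Suc k))) (y (\<phi> k)) then 1 else 2)" using fval[of k "Suc k"] by simp
      have "(if lt (x (Suc (\<phi> (Suc k)))) (x (Suc (\<phi> k))) then 0
     else if lt (y (\<phi> (Suc k))) (y (\<phi> k)) then 1 else (2::nat)) = 0" using b[symmetric] a by (rule trans)
      from if3[OF this] show ?thesis by simp
    qed
    note ch = this
    have g1: "\<And>k. (\<lambda>k. x (Suc (\<phi> k))) k \<in> S" using x(1) by simp
    have g2: "\<And>k. lt ((\<lambda>k. x (Suc (\<phi> k))) (Suc k)) ((\<lambda>k. x (Suc (\<phi> k))) k)" using ch by simp
    show False by (rule wfp_no_chain[where g="\<lambda>k. x (Suc (\<phi> k))", OF wfS g1 g2])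
  next
    case 2
    have "lt (y (\<phi> (Suc k))) (y (\<phi> k))" for k
    proof -
      have a: "f {\<phi> k, \<phi> (Suc k)} = 1" using hom[of k "Suc k"] 2 by simp
      have b: "f {\<phi> k, \<phi> (Suc k)} = (if lt (x (Suc (\<phi> (Suc k)))) (x (Suc (\<phi> k))) then 0
     else if lt (y (\<phi> (Suc k))) (y (\<phi> k)) then 1 else 2)" using fval[of k "Suc k"] by simp
      have "(if lt (x (Suc (\<phi> (Suc k)))) (x (Suc (\<phi> k))) then 0
     else if lt (y (\<phi> (Suc k))) (y (\<phi> k)) then 1 else (2::nat)) = 1" using b[symmetric] a by (rule trans)
      from if3[OF this] show ?thesis by simp
    qed
    note ch = this
    have g1: "\<And>k. (\<lambda>k. y (\<phi> k)) k \<in> S" using yS by simp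
    have g2: "\<And>k. lt ((\<lambda>k. y (\<phi> k)) (Suc k)) ((\<lambda>k. y (\<phi> k)) k)" using ch by simp
    show False by (rule wfp_no_chain[where g="\<lambda>k. y (\<phi> k)", OF wfS g1 g2])
  next
    case 3
    have hxy: "\<not> lt (x (Suc (\<phi> b))) (x (Suc (\<phi> a))) \<and> \<not> lt (y (\<phi> b)) (y (\<phi> a))" if ab: "a < b" for a b
    proof -
      have a: "f {\<phi> a, \<phi> b} = 2" using hom[OF ab] 3 by simp
      have b: "f {\<phi> a, \<phi> b} = (if lt (x (Suc (\<phi> b))) (x (Suc (\<phi> a))) then 0
     else if lt (y (\<phi> b)) (y (\<phi> a)) then 1 else 2)" using fval[OF ab] by simp
      have "(if lt (x (Suc (\<phi> b))) (x (Suc (\<phi> a))) then 0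
     else if lt (y (\<phi> b)) (y (\<phi> a)) then 1 else (2::nat)) = 2" using b[symmetric] a by (rule trans)
      from if3[OF this] show ?thesis by simp
    qed
    have hx: "a < b \<Longrightarrow> \<not> lt (x (Suc (\<phi> b))) (x (Suc (\<phi> a)))" for a b using hxy[of a b] by simp
    have hy: "a < b \<Longrightarrow> \<not> lt (y (\<phi> b)) (y (\<phi> a))" for a b using hxy[of a b] by simp
    have phle: "\<phi> a \<le> \<phi> b \<longleftrightarrow> a \<le> b" for a b using sm strict_mono_less_eq by blast
    have phlt: "\<phi> a < \<phi> b \<longleftrightarrow> a < b" for a b using sm strict_mono_less by blast
    define \<pi> where "\<pi> e = (case e of Inl m \<Rightarrow> x (Suc (\<phi> m)) | Inr n \<Rightarrow> y (\<phi> n))" for e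
    have pa: "lt (\<pi> (Inl m)) (\<pi> (Inr n)) \<longleftrightarrow> n \<le> m" for m n
      unfolding \<pi>_def using F1 phle by simp
    have pb: "\<not> lt (\<pi> (Inl a)) (\<pi> (Inl b))" for a b
    proof (cases a b rule: linorder_cases)
      case less then show ?thesis unfolding \<pi>_def using F3[of "Suc (\<phi> a)" "Suc (\<phi> b)"] phlt by simp
    next
      case equal then show ?thesis unfolding \<pi>_def using irr x(1) by simp
    next
      case greater then show ?thesis unfolding \<pi>_def using hx by simp
    qed
    have pc: "\<not> lt (\<pi> (Inr a)) (\<pi> (Inr b))" for a b
    proof (cases a b rule: linorder_cases)
      case less then show ?thesis unfolding \<pi>_def using F4[of "\<phi> a" "\<phi> b"] phlt by simp
    next
      case equal then show ?thesis unfolding \<pi>_def using irr yS by simp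
    next
      case greater then show ?thesis unfolding \<pi>_def using hy by simp
    qed
    have pd: "\<not> lt (\<pi> (Inr n)) (\<pi> (Inl m))" for m n
    proof
      assume l: "lt (\<pi> (Inr n)) (\<pi> (Inl m))"
      show False
      proof (cases "n \<le> m")
        case True
        then have "lt (\<pi> (Inl m)) (\<pi> (Inr n))" using pa by simp
        then show False using l tr[OF x(1) yS x(1), of "Suc (\<phi> m)" "\<phi> n" "Suc (\<phi> m)"] irr[OF x(1)] unfolding \<pi>_def by simp
      next
        case False
        have "lt (\<pi> (Inl n)) (\<pi> (Inr n))" using pa by simp
        then have "lt (\<pi> (Inl n)) (\<pi> (Inl m))" using l tr[OF x(1) yS x(1), of "Suc (\<phi> n)" "\<phi> n" "Suc (\<phi> m)"] unfolding \<pi>_def by simp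
        then show False using pb by blast
      qed
    qed
    have pe: "\<pi> (Inl m) \<noteq> \<pi> (Inr n)" for m n
    proof
      assume e: "\<pi> (Inl m) = \<pi> (Inr n)"
      show False
      proof (cases "n \<le> m")
        case True
        then have "lt (\<pi> (Inl m)) (\<pi> (Inr n))" using pa by simp
        then show False using e irr[OF yS] unfolding \<pi>_def by simp
      next
        case False
        have "lt (\<pi> (Inl n)) (\<pi> (Inr n))" using pa by simp
        then have "lt (\<pi> (Inl n)) (\<pi> (Inl m))" using e by simp
        then show False using pb by blast
      qed
    qed
    have "order_embedding (UNIV :: (nat + nat) set) S\<omega>2_less S lt \<pi>"
      unfolding order_embedding_def
    proof (intro conjI ballI)
      show "\<pi> ` UNIV \<subseteq> S" using x(1) yS by (auto simp: \<pi>_def split: sum.splits)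
      show "inj_on \<pi> UNIV" unfolding inj_on_def
      proof (intro ballI impI)
        fix e g :: "nat + nat" assume eq: "\<pi> e = \<pi> g"
        show "e = g"
        proof (cases e; cases g)
          fix a b assume "e = Inl a" "g = Inl b"
          then have "x (Suc (\<phi> a)) = x (Suc (\<phi> b))" using eq unfolding \<pi>_def by simp
          then have "Suc (\<phi> a) = Suc (\<phi> b)" by (rule xinj)
          then show ?thesis using \<open>e = Inl a\<close> \<open>g = Inl b\<close> strict_mono_eq[OF sm] by simp
        next
          fix a b assume "e = Inr a" "g = Inr b"
          then have "y (\<phi> a) = y (\<phi> b)" using eq unfolding \<pi>_def by simp
          then have "\<phi> a = \<phi> b" by (rule yinj)
          then show ?thesis using \<open>e = Inr a\<close> \<open>g = Inr b\<close> strict_mono_eq[OF sm] by simp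
        next
          fix a b assume "e = Inl a" "g = Inr b" then show ?thesis using eq pe by simp
        next
          fix a b assume "e = Inr a" "g = Inl b" then show ?thesis using eq pe by metis
        qed
      qed
      fix e g :: "nat + nat"
      show "S\<omega>2_less e g = lt (\<pi> e) (\<pi> g)"
        by (cases e; cases g) (simp_all add: pa pb pc pd)
    qed
    then show False using t unfolding tame_def embeds_def by blast
  qed
qed




lemma CU_sub: "C \<in> CU S lt \<Longrightarrow> C \<subseteq> S" unfolding CU_def cu_def by auto

lemma up_cu: "up S lt x = S - cu S lt x" unfolding cu_def up_def by auto

lemma y_in_cu: "strict_po S lt \<Longrightarrow> y \<in> S \<Longrightarrow> y \<in> cu S lt y"
  using spo_irr by (simp add: cu_mem)

lemma cu_in: "x \<in> S \<Longrightarrow> cu S lt x \<in> CU S lt" unfolding CU_def by auto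

lemma Field_tamerank: "Field (tamerank S lt) = CU S lt"
  unfolding tamerank_def Field_def by auto

lemma CU_chain:
  assumes po: "strict_po S lt" and t: "tame S lt" and C: "C \<in> CU S lt" and D: "D \<in> CU S lt"
  shows "C \<subseteq> D \<or> D \<subseteq> C"
  using C D cu_chain[OF po t] unfolding CU_def by blast

lemma tamerank_WO:
  assumes po: "strict_po S lt" and wfS: "wfp_on S lt" and t: "tame S lt"
  shows "Well_order (tamerank S lt)"
proof -
  let ?T = "tamerank S lt"
  have wf: "wf (?T - Id)"
    unfolding wf_iff_no_infinite_down_chain
  proof
    assume "\<exists>f. \<forall>i. (f (Suc i), f i) \<in> ?T - Id"
    then obtain c where c: "\<And>i. (c (Suc i), c i) \<in> ?T - Id" by blast
    have "c i \<in> CU S lt" "c (Suc i) \<subset> c i" for i using c[of i] unfolding tamerank_def by auto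
    then show False using cu_wf[OF po wfS t] by blast
  qed
  have "well_order_on (CU S lt) ?T"
    unfolding order_on_defs
  proof (intro conjI)
    show "?T \<subseteq> CU S lt \<times> CU S lt" unfolding tamerank_def by auto
    show "refl_on (CU S lt) ?T" unfolding tamerank_def refl_on_def by auto
    show "trans ?T" unfolding tamerank_def trans_def by auto
    show "antisym ?T" unfolding tamerank_def antisym_def by auto
    show "total_on (CU S lt) ?T" unfolding tamerank_def total_on_def using CU_chain[OF po t] by blast
  qed (rule wf)
  then show ?thesis using Field_tamerank by metis
qed

lemma tamerank_embed:
  assumes po: "strict_po S lt" and wfS: "wfp_on S lt" and t: "tame S lt" and red: "reduced S lt"
  shows "embeds S lt (R_carrier (tamerank S lt)) (R_less (tamerank S lt))"
proof -
  let ?T = "tamerank S lt"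
  have wf: "wf (?T - Id)" using tamerank_WO[OF po wfS t] wo_facts(5) by blast
  have ex: "\<exists>C. C \<in> CU S lt \<and> y \<in> C \<and> (\<forall>D\<in>CU S lt. y \<in> D \<longrightarrow> C \<subseteq> D)" if y: "y \<in> S" for y
  proof -
    define B where "B = {C \<in> CU S lt. y \<in> C}"
    have "cu S lt y \<in> B" unfolding B_def using cu_in[OF y] spo_irr[OF po y] y by (simp add: cu_mem)
    then obtain m where m: "m \<in> B" "\<And>D. (D, m) \<in> ?T - Id \<Longrightarrow> D \<notin> B"
      by (rule wfE_min[OF wf]) blast
    have "m \<subseteq> D" if "D \<in> CU S lt" "y \<in> D" for D
    proof (rule ccontr)
      assume "\<not> m \<subseteq> D"
      then have "D \<subseteq> m" "D \<noteq> m" using CU_chain[OF po t that(1)] m(1) unfolding B_def by auto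
      then have "(D, m) \<in> ?T - Id" using that m(1) unfolding B_def tamerank_def by auto
      then show False using m(2) that unfolding B_def by blast
    qed
    then show ?thesis using m(1) unfolding B_def by blast
  qed
  define \<alpha> where "\<alpha> y = (SOME C. C \<in> CU S lt \<and> y \<in> C \<and> (\<forall>D\<in>CU S lt. y \<in> D \<longrightarrow> C \<subseteq> D))" for y
  have al0: "\<alpha> y \<in> CU S lt \<and> y \<in> \<alpha> y \<and> (\<forall>D\<in>CU S lt. y \<in> D \<longrightarrow> \<alpha> y \<subseteq> D)" if "y \<in> S" for y
    unfolding \<alpha>_def by (rule someI_ex, rule ex[OF that])
  have al: "\<alpha> y \<in> CU S lt" "y \<in> \<alpha> y" "\<And>D. D \<in> CU S lt \<Longrightarrow> y \<in> D \<Longrightarrow> \<alpha> y \<subseteq> D" if "y \<in> S" for y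
    using al0[OF that] by auto
  have key: "lt x y \<longleftrightarrow> cu S lt x \<subset> \<alpha> y" if x: "x \<in> S" and y: "y \<in> S" for x y
  proof
    assume l: "lt x y"
    then have "y \<notin> cu S lt x" using cu_mem by metis
    then show "cu S lt x \<subset> \<alpha> y" using CU_chain[OF po t cu_in[OF x] al(1)[OF y]] al(2)[OF y] by blast
  next
    assume s: "cu S lt x \<subset> \<alpha> y"
    show "lt x y"
    proof (rule ccontr)
      assume "\<not> lt x y"
      then have "y \<in> cu S lt x" using y cu_mem by metis
      then have "\<alpha> y \<subseteq> cu S lt x" using al(3)[OF y cu_in[OF x]] by blast
      then show False using s by blast
    qed
  qed
  define \<pi> where "\<pi> y = (\<alpha> y, cu S lt y)" for y
  have "order_embedding S lt (R_carrier ?T) (R_less ?T) \<pi>"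
    unfolding order_embedding_def
  proof (intro conjI ballI)
    show "\<pi> ` S \<subseteq> R_carrier ?T"
    proof
      fix p assume "p \<in> \<pi> ` S"
      then obtain y where y: "y \<in> S" "p = \<pi> y" by blast
      have "\<alpha> y \<subseteq> cu S lt y" by (rule al(3)[OF y(1) cu_in[OF y(1)] y_in_cu[OF po y(1)]])
      then show "p \<in> R_carrier ?T" using y al(1)[OF y(1)] cu_in[OF y(1)]
        unfolding R_carrier_def tamerank_def \<pi>_def by auto
    qed
    show "inj_on \<pi> S"
    proof (rule inj_onI)
      fix x y assume x: "x \<in> S" and y: "y \<in> S" and e: "\<pi> x = \<pi> y"
      then have a: "\<alpha> x = \<alpha> y" and c: "cu S lt x = cu S lt y" unfolding \<pi>_def by auto
      have "up S lt x = up S lt y" using c by (simp add: up_cu)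
      moreover have "down S lt x = down S lt y"
        unfolding down_def using key[OF _ x] key[OF _ y] a by auto
      ultimately show "x = y" using red x y unfolding reduced_def by blast
    qed
    fix x y assume x: "x \<in> S" and y: "y \<in> S"
    show "lt x y = R_less ?T (\<pi> x) (\<pi> y)"
      using key[OF x y] al(1)[OF y] cu_in[OF x] unfolding R_less_def \<pi>_def tamerank_def by auto
  qed
  then show ?thesis unfolding embeds_def by blast
qed

lemma tamerank_min:
  assumes po: "strict_po S lt" and wfS: "wfp_on S lt" and t: "tame S lt"
    and r: "Well_order r" and e: "embeds S lt (R_carrier r) (R_less r)"
  shows "(tamerank S lt, r) \<in> ordLeq"
proof -
  obtain \<pi> where p: "order_embedding S lt (R_carrier r) (R_less r) \<pi>" using e unfolding embeds_def by blast
  have inr: "\<pi> z \<in> r" if "z \<in> S" for z using p that unfolding order_embedding_def R_carrier_def by auto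
  have F: "fst (\<pi> z) \<in> Field r" "snd (\<pi> z) \<in> Field r" if "z \<in> S" for z
    using inr[OF that] by (metis FieldI1 FieldI2 prod.collapse)+
  have rel: "lt a b \<longleftrightarrow> R_less r (\<pi> a) (\<pi> b)" if "a \<in> S" "b \<in> S" for a b
    using p that unfolding order_embedding_def by auto
  note tr = wo_facts(1)[OF r] and an = wo_facts(2)[OF r]
  have sm: "(snd (\<pi> x), snd (\<pi> y)) \<in> r \<and> snd (\<pi> x) \<noteq> snd (\<pi> y)"
    if x: "x \<in> S" and y: "y \<in> S" and s: "cu S lt x \<subset> cu S lt y" for x y
  proof -
    have "up S lt y \<subset> up S lt x" using s up_sub[of S lt x] up_sub[of S lt y] unfolding cu_def by auto
    then obtain z where z: "z \<in> up S lt x" "z \<notin> up S lt y" by blast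
    then have zS: "z \<in> S" and xz: "lt x z" and yz: "\<not> lt y z" unfolding up_def by auto
    have 1: "(snd (\<pi> x), fst (\<pi> z)) \<in> r" "snd (\<pi> x) \<noteq> fst (\<pi> z)"
      using rel[OF x zS] xz unfolding R_less_def by simp_all
    have "\<not> ((snd (\<pi> y), fst (\<pi> z)) \<in> r \<and> snd (\<pi> y) \<noteq> fst (\<pi> z))"
      using rel[OF y zS] yz unfolding R_less_def by simp
    then have 2: "(fst (\<pi> z), snd (\<pi> y)) \<in> r" by (rule wo_le_total[OF r F(2)[OF y] F(1)[OF zS]])
    have "(snd (\<pi> x), snd (\<pi> y)) \<in> r" by (rule transD[OF tr 1(1) 2])
    moreover have "snd (\<pi> x) \<noteq> snd (\<pi> y)"
    proof
      assume "snd (\<pi> x) = snd (\<pi> y)"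
      then have "(fst (\<pi> z), snd (\<pi> x)) \<in> r" using 2 by simp
      then have "fst (\<pi> z) = snd (\<pi> x)" using antisymD[OF an _ 1(1)] by blast
      then show False using 1(2) by simp
    qed
    ultimately show ?thesis by blast
  qed
  define rep where "rep C = (SOME x. x \<in> S \<and> cu S lt x = C)" for C
  have rep0: "rep C \<in> S \<and> cu S lt (rep C) = C" if "C \<in> CU S lt" for C
  proof -
    have "\<exists>x. x \<in> S \<and> cu S lt x = C" using that unfolding CU_def by (rule imageE) blast
    then show ?thesis unfolding rep_def by (rule someI_ex)
  qed
  define g where "g C = snd (\<pi> (rep C))" for C
  show ?thesis
  proof (rule strict_mono_ordLeq[OF tamerank_WO[OF po wfS t] r])
    fix C assume "C \<in> Field (tamerank S lt)"
    then have "C \<in> CU S lt" by (simp add: Field_tamerank)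
    then have "rep C \<in> S" using rep0 by blast
    then show "g C \<in> Field r" unfolding g_def by (rule F(2))
  next
    fix C D assume a: "(C, D) \<in> tamerank S lt" "C \<noteq> D"
    then have C: "C \<in> CU S lt" and D: "D \<in> CU S lt" and CD: "C \<subset> D" unfolding tamerank_def by auto
    have "cu S lt (rep C) \<subset> cu S lt (rep D)" using rep0[OF C] rep0[OF D] CD by simp
    then show "(g C, g D) \<in> r \<and> g C \<noteq> g D" unfolding g_def
      using sm rep0[OF C] rep0[OF D] by blast
  qed
qed

lemma tamerank_card:
  assumes po: "strict_po S lt" and wfS: "wfp_on S lt" and t: "tame S lt"
  shows "(tamerank S lt, cardSuc (card_of S)) \<in> ordLess"
proof (rule ccontr)
  let ?T = "tamerank S lt"
  have T: "Well_order ?T" using tamerank_WO[OF po wfS t] .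
  have co: "Card_order (card_of S)" by (rule card_of_Card_order)
  have cs: "Card_order (cardSuc (card_of S))" using cardSuc_Card_order[OF co] .
  have csw: "Well_order (cardSuc (card_of S))" using cs card_order_on_def by blast
  assume "(?T, cardSuc (card_of S)) \<notin> ordLess"
  then have "(cardSuc (card_of S), ?T) \<in> ordLeq" using not_ordLess_iff_ordLeq[OF csw T] by simp
  then have "(card_of (Field (cardSuc (card_of S))), card_of (Field ?T)) \<in> ordLeq" by (rule card_of_mono2)
  moreover have "(card_of (Field ?T), card_of S) \<in> ordLeq"
    unfolding Field_tamerank CU_def by (rule card_of_image)
  moreover have "(cardSuc (card_of S), card_of (Field (cardSuc (card_of S)))) \<in> ordLeq"
    using card_of_Field_ordIso[OF cs] ordIso_iff_ordLeq by blast
  ultimately have "(cardSuc (card_of S), card_of S) \<in> ordLeq" using ordLeq_transitive by metis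
  moreover have "(card_of S, cardSuc (card_of S)) \<in> ordLess" using cardSuc_greater[OF co] by simp
  ultimately show False using not_ordLess_ordLeq by blast
qed

theorem proposition2p10:
  fixes S :: "'a set" and lt :: "'a \<Rightarrow> 'a \<Rightarrow> bool"
  assumes "strict_po S lt"
    and "wfp_on S lt"
    and "reduced S lt"
  shows "(tame S lt \<longleftrightarrow>
            (\<exists>r :: 'a set rel. Well_order r \<and> embeds S lt (R_carrier r) (R_less r)))
       \<and> (\<forall>r :: 'b rel. Well_order r \<and> embeds S lt (R_carrier r) (R_less r) \<longrightarrow> tame S lt)
       \<and> (tame S lt \<longrightarrow>
            Well_order (tamerank S lt)
            \<and> embeds S lt (R_carrier (tamerank S lt)) (R_less (tamerank S lt))
            \<and> (\<forall>r :: 'b rel. Well_order r \<and> embeds S lt (R_carrier r) (R_less r)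
                  \<longrightarrow> (tamerank S lt, r) \<in> ordLeq)
            \<and> (tamerank S lt, cardSuc (card_of S)) \<in> ordLess)"
proof (intro conjI impI allI)
  show "tame S lt \<longleftrightarrow> (\<exists>r :: 'a set rel. Well_order r \<and> embeds S lt (R_carrier r) (R_less r))"
  proof
    assume t: "tame S lt"
    show "\<exists>r :: 'a set rel. Well_order r \<and> embeds S lt (R_carrier r) (R_less r)"
      using tamerank_WO[OF assms(1,2) t] tamerank_embed[OF assms(1,2) t assms(3)] by blast
  next
    assume "\<exists>r :: 'a set rel. Well_order r \<and> embeds S lt (R_carrier r) (R_less r)"
    then obtain r :: "'a set rel" where "Well_order r" "embeds S lt (R_carrier r) (R_less r)" by blast
    then show "tame S lt" by (rule R_tame)
  qed
next
  fix r :: "'b rel"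
  assume "Well_order r \<and> embeds S lt (R_carrier r) (R_less r)"
  then show "tame S lt" using R_tame by blast
next
  assume t: "tame S lt"
  show "Well_order (tamerank S lt)" by (rule tamerank_WO[OF assms(1,2) t])
  show "embeds S lt (R_carrier (tamerank S lt)) (R_less (tamerank S lt))"
    by (rule tamerank_embed[OF assms(1,2) t assms(3)])
  show "(tamerank S lt, cardSuc (card_of S)) \<in> ordLess" by (rule tamerank_card[OF assms(1,2) t])
  fix r :: "'b rel"
  assume "Well_order r \<and> embeds S lt (R_carrier r) (R_less r)"
  then show "(tamerank S lt, r) \<in> ordLeq" using tamerank_min[OF assms(1,2) t] by blast
qed


end
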